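(* Let $\Gamma$ and $\Delta$ be sets and $\{f_\delta\}_{\delta\in\Delta}$ a family of real-valued functions on $\Gamma$ such that (i) for every $\delta\in\Delta$ the support $\{\gamma: f_\delta(\gamma)\ne0\}$ is countable, and (ii) for every $\gamma\in\Gamma$ the set $\{\delta\in\Delta: f_\delta(\gamma)\neq0\}$ is nonempty and countable. Then there exist an index set $D$ and partitions $(\Gamma_d)_{d\in D}$ of $\Gamma$ and $(\Delta_d)_{d\in D}$ of $\Delta$ into countable sets such that for $d_1\neq d_2$ we have $\Gamma_{d_1}\cap\Gamma_{d_2}=\emptyset$, $\Delta_{d_1}\cap\Delta_{d_2}=\emptyset$, and $f_\delta(\gamma)=0$ whenever $\gamma\in\Gamma_{d_1},\delta\in\Delta_{d_2}$ or $\gamma\in\Gamma_{d_2},\delta\in\Delta_{d_1}$. *)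

theory Defs
  imports Complex_Main "HOL-Library.Countable_Set"
begin

end

theory Submission
  imports Defs
begin

lemma countable_relpowp:
  fixes P :: "'a \<Rightarrow> 'a \<Rightarrow> bool"
  assumes "\<And>z. countable {y. P z y}"
  shows "countable {y. (P ^^ n) x y}"
proof (induction n)
  case 0
  have "{y. (P ^^ 0) x y} = {x}" by auto
  then show ?case by simp
next
  case (Suc n)
  have "{y. (P ^^ Suc n) x y} = (\<Union>z\<in>{y. (P ^^ n) x y}. {y. P z y})"
    by (auto simp: relcompp_apply)
  then show ?case using Suc assms by auto
qed

lemma countable_rtranclp:
  fixes P :: "'a \<Rightarrow> 'a \<Rightarrow> bool"
  assumes "\<And>z. countable {y. P z y}"
  shows "countable {y. P\<^sup>*\<^sup>* x y}"
proof -
  have "{y. P\<^sup>*\<^sup>* x y} = (\<Union>n. {y. (P ^^ n) x y})"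
    by (auto simp: rtranclp_power)
  moreover have "countable {y. (P ^^ n) x y}" for n by (rule countable_relpowp) (rule assms)
  ultimately show ?thesis by auto
qed

lemma rtranclp_sym:
  assumes "\<And>a b. P a b \<Longrightarrow> P b a" and "P\<^sup>*\<^sup>* x y"
  shows "P\<^sup>*\<^sup>* y x"
  using assms(2)
proof (induction rule: rtranclp_induct)
  case base then show ?case by simp
next
  case (step y z)
  then show ?case using assms(1) by (meson converse_rtranclp_into_rtranclp)
qed

theorem lemma3p7:
  fixes \<Gamma> :: "'g set" and \<Delta> :: "'d set" and f :: "'d \<Rightarrow> 'g \<Rightarrow> real"
  assumes supp_countable: "\<And>\<delta>. \<delta> \<in> \<Delta> \<Longrightarrow> countable {\<gamma> \<in> \<Gamma>. f \<delta> \<gamma> \<noteq> 0}"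
    and col_nonempty: "\<And>\<gamma>. \<gamma> \<in> \<Gamma> \<Longrightarrow> {\<delta> \<in> \<Delta>. f \<delta> \<gamma> \<noteq> 0} \<noteq> {}"
    and col_countable: "\<And>\<gamma>. \<gamma> \<in> \<Gamma> \<Longrightarrow> countable {\<delta> \<in> \<Delta>. f \<delta> \<gamma> \<noteq> 0}"
  shows "\<exists>(D :: ('g + 'd) set) (G :: 'g + 'd \<Rightarrow> 'g set) (E :: 'g + 'd \<Rightarrow> 'd set).
           (\<Union>d\<in>D. G d) = \<Gamma> \<and> (\<Union>d\<in>D. E d) = \<Delta> \<and>
           (\<forall>d\<in>D. countable (G d) \<and> countable (E d)) \<and>
           (\<forall>d1\<in>D. \<forall>d2\<in>D. d1 \<noteq> d2 \<longrightarrow>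
              G d1 \<inter> G d2 = {} \<and> E d1 \<inter> E d2 = {} \<and>
              (\<forall>\<gamma>\<in>G d1. \<forall>\<delta>\<in>E d2. f \<delta> \<gamma> = 0) \<and>
              (\<forall>\<gamma>\<in>G d2. \<forall>\<delta>\<in>E d1. f \<delta> \<gamma> = 0))"
proof -
  define adj :: "'g + 'd \<Rightarrow> 'g + 'd \<Rightarrow> bool" where
    "adj x y = (\<exists>\<gamma> \<delta>. \<gamma> \<in> \<Gamma> \<and> \<delta> \<in> \<Delta> \<and> f \<delta> \<gamma> \<noteq> 0 \<and>
        ((x = Inl \<gamma> \<and> y = Inr \<delta>) \<or> (x = Inr \<delta> \<and> y = Inl \<gamma>)))" for x y
  define R where "R = adj\<^sup>*\<^sup>*"
  have adj_sym: "adj a b \<Longrightarrow> adj b a" for a b unfolding adj_def by blast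
  have Rsym: "R a b \<Longrightarrow> R b a" for a b
    unfolding R_def using rtranclp_sym[of adj, OF adj_sym] by blast
  have Rtrans: "R a b \<Longrightarrow> R b c \<Longrightarrow> R a c" for a b c
    unfolding R_def by auto
  have Rrefl: "R a a" for a unfolding R_def by auto
  have Req: "R a b \<Longrightarrow> R a = R b" for a b
  proof -
    assume "R a b"
    show "R a = R b"
    proof (rule ext, rule iffI)
      fix c assume "R a c" then show "R b c" using \<open>R a b\<close> Rsym Rtrans by metis
    next
      fix c assume "R b c" then show "R a c" using \<open>R a b\<close> Rtrans by metis
    qed
  qed
  have nb: "countable {y. adj z y}" for z
  proof (cases z)
    case (Inl \<gamma>)
    have "{y. adj z y} \<subseteq> Inr ` {\<delta> \<in> \<Delta>. f \<delta> \<gamma> \<noteq> 0}"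
      using Inl unfolding adj_def by auto
    moreover have "{y. adj z y} = {}" if "\<gamma> \<notin> \<Gamma>"
      using Inl that unfolding adj_def by auto
    ultimately show ?thesis using col_countable
      by (cases "\<gamma> \<in> \<Gamma>") (auto intro: countable_subset)
  next
    case (Inr \<delta>)
    have "{y. adj z y} \<subseteq> Inl ` {\<gamma> \<in> \<Gamma>. f \<delta> \<gamma> \<noteq> 0}"
      using Inr unfolding adj_def by auto
    moreover have "{y. adj z y} = {}" if "\<delta> \<notin> \<Delta>"
      using Inr that unfolding adj_def by auto
    ultimately show ?thesis using supp_countable
      by (cases "\<delta> \<in> \<Delta>") (auto intro: countable_subset)
  qed
  have compc: "countable {y. R x y}" for x
    unfolding R_def using countable_rtranclp[OF nb] .
  define r where "r x = Eps (R x)" for x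
  have Rr: "R x (r x)" for x unfolding r_def using Rrefl by (rule someI)
  have rR: "R x y \<Longrightarrow> r x = r y" for x y unfolding r_def using Req by metis
  define V where "V = Inl ` \<Gamma> \<union> Inr ` \<Delta>"
  define D where "D = r ` V"
  define G where "G d = {\<gamma> \<in> \<Gamma>. R d (Inl \<gamma>)}" for d
  define E where "E d = {\<delta> \<in> \<Delta>. R d (Inr \<delta>)}" for d
  have sameD: "d1 \<in> D \<Longrightarrow> d2 \<in> D \<Longrightarrow> R d1 d2 \<Longrightarrow> d1 = d2" for d1 d2
  proof -
    assume "d1 \<in> D" "d2 \<in> D" "R d1 d2"
    then obtain x1 x2 where "d1 = r x1" "d2 = r x2" unfolding D_def by auto
    then have "R x1 x2" using Rr \<open>R d1 d2\<close> Rsym Rtrans by metis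
    then show "d1 = d2" using rR \<open>d1 = r x1\<close> \<open>d2 = r x2\<close> by simp
  qed
  have c1: "(\<Union>d\<in>D. G d) = \<Gamma>"
  proof
    show "(\<Union>d\<in>D. G d) \<subseteq> \<Gamma>" unfolding G_def by auto
    show "\<Gamma> \<subseteq> (\<Union>d\<in>D. G d)"
    proof
      fix \<gamma> assume "\<gamma> \<in> \<Gamma>"
      then have "r (Inl \<gamma>) \<in> D" unfolding D_def V_def by auto
      moreover have "\<gamma> \<in> G (r (Inl \<gamma>))" unfolding G_def using \<open>\<gamma> \<in> \<Gamma>\<close> Rsym[OF Rr] by simp
      ultimately show "\<gamma> \<in> (\<Union>d\<in>D. G d)" by auto
    qed
  qed
  have c2: "(\<Union>d\<in>D. E d) = \<Delta>"
  proof
    show "(\<Union>d\<in>D. E d) \<subseteq> \<Delta>" unfolding E_def by auto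
    show "\<Delta> \<subseteq> (\<Union>d\<in>D. E d)"
    proof
      fix \<delta> assume "\<delta> \<in> \<Delta>"
      then have "r (Inr \<delta>) \<in> D" unfolding D_def V_def by auto
      moreover have "\<delta> \<in> E (r (Inr \<delta>))" unfolding E_def using \<open>\<delta> \<in> \<Delta>\<close> Rsym[OF Rr] by simp
      ultimately show "\<delta> \<in> (\<Union>d\<in>D. E d)" by auto
    qed
  qed
  have c3: "countable (G d) \<and> countable (E d)" for d
  proof
    have "(Inl ` G d :: ('g + 'd) set) \<subseteq> {y. R d y}" unfolding G_def by auto
    then have "countable (Inl ` G d :: ('g + 'd) set)" using compc[of d] by (rule countable_subset)
    then show "countable (G d)" by (rule countable_image_inj_on) auto
    have "(Inr ` E d :: ('g + 'd) set) \<subseteq> {y. R d y}" unfolding E_def by auto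
    then have "countable (Inr ` E d :: ('g + 'd) set)" using compc[of d] by (rule countable_subset)
    then show "countable (E d)" by (rule countable_image_inj_on) auto
  qed
  have zero: "d1 \<in> D \<Longrightarrow> d2 \<in> D \<Longrightarrow> d1 \<noteq> d2 \<Longrightarrow> \<gamma> \<in> G d1 \<Longrightarrow> \<delta> \<in> E d2 \<Longrightarrow> f \<delta> \<gamma> = 0"
    for d1 d2 \<gamma> \<delta>
  proof (rule ccontr)
    assume h: "d1 \<in> D" "d2 \<in> D" "d1 \<noteq> d2" "\<gamma> \<in> G d1" "\<delta> \<in> E d2" "f \<delta> \<gamma> \<noteq> 0"
    then have "adj (Inl \<gamma>) (Inr \<delta>)" unfolding adj_def G_def E_def by auto
    then have "R (Inl \<gamma>) (Inr \<delta>)" unfolding R_def by auto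
    moreover have "R d1 (Inl \<gamma>)" "R d2 (Inr \<delta>)" using h(4,5) unfolding G_def E_def by auto
    ultimately have "R d1 d2" using Rsym Rtrans by metis
    then show False using sameD h by simp
  qed
  have c4: "\<forall>d1\<in>D. \<forall>d2\<in>D. d1 \<noteq> d2 \<longrightarrow>
              G d1 \<inter> G d2 = {} \<and> E d1 \<inter> E d2 = {} \<and>
              (\<forall>\<gamma>\<in>G d1. \<forall>\<delta>\<in>E d2. f \<delta> \<gamma> = 0) \<and>
              (\<forall>\<gamma>\<in>G d2. \<forall>\<delta>\<in>E d1. f \<delta> \<gamma> = 0)"
  proof (intro ballI impI conjI)
    fix d1 d2 assume h: "d1 \<in> D" "d2 \<in> D" "d1 \<noteq> d2"
    show "G d1 \<inter> G d2 = {}"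
    proof (rule ccontr)
      assume "G d1 \<inter> G d2 \<noteq> {}"
      then obtain g where "R d1 (Inl g)" "R d2 (Inl g)" unfolding G_def by auto
      then have "R d1 d2" using Rsym Rtrans by metis
      then show False using sameD h by simp
    qed
    show "E d1 \<inter> E d2 = {}"
    proof (rule ccontr)
      assume "E d1 \<inter> E d2 \<noteq> {}"
      then obtain g where "R d1 (Inr g)" "R d2 (Inr g)" unfolding E_def by auto
      then have "R d1 d2" using Rsym Rtrans by metis
      then show False using sameD h by simp
    qed
    show "\<And>\<gamma> \<delta>. \<gamma> \<in> G d1 \<Longrightarrow> \<delta> \<in> E d2 \<Longrightarrow> f \<delta> \<gamma> = 0" using zero h by simp
    show "\<And>\<gamma> \<delta>. \<gamma> \<in> G d2 \<Longrightarrow> \<delta> \<in> E d1 \<Longrightarrow> f \<delta> \<gamma> = 0" using zero h by (metis (no_types))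
  qed
  show ?thesis
    apply (rule exI[of _ D], rule exI[of _ G], rule exI[of _ E])
    using c1 c2 c3 c4 by simp
qed

end
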